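(* Let $0\le s<r<n$, let $t\ge 4$ be an integer, and let $x$ be any vertex of $G(n,r,s)$. Then $$0\le\frac{\operatorname{hom}(C_t,G(n,r,s))-\operatorname{mon}(C_t,G(n,r,s))}{\operatorname{hom}(C_t,G(n,r,s))}\le t\sum_{k=2}^{t-2}\frac{P^k(x,x)\,P^{t-k}(x,x)}{P^t(x,x)}.$$
   Context: For integers $0\le s<r<n$, $G(n,r,s)$ is the simple graph whose vertices are the $r$-element subsets of $\{1,\dots,n\}$, with $x,y$ adjacent iff $|x\cap y|=s$; it is vertex-transitive and regular of degree $N_1=\binom{r}{s}\binom{n-r}{r-s}$. $C_t$ is the cycle on $t$ vertices; $\operatorname{hom}$ and $\operatorname{mon}$ count homomorphisms and injective homomorphisms. $P^k(x,y)$ denotes the $k$-step transition probability from $x$ to $y$ of the simple random walk on $G(n,r,s)$ (at each step move to a uniformly random neighbour of the current vertex). *)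

theory Defs
  imports Complex_Main "HOL-Library.FuncSet"
begin

definition gj_vertices :: "nat \<Rightarrow> nat \<Rightarrow> nat set set" where
  "gj_vertices n r = {A. A \<subseteq> {1..n} \<and> card A = r}"

definition gj_adj :: "nat \<Rightarrow> nat set \<Rightarrow> nat set \<Rightarrow> bool" where
  "gj_adj s x y \<longleftrightarrow> card (x \<inter> y) = s"

definition cycle_homs :: "nat \<Rightarrow> 'a set \<Rightarrow> ('a \<Rightarrow> 'a \<Rightarrow> bool) \<Rightarrow> (nat \<Rightarrow> 'a) set" where
  "cycle_homs t V E = {f \<in> {0..<t} \<rightarrow>\<^sub>E V. \<forall>i<t. E (f i) (f (Suc i mod t))}"

definition hom_cycle :: "nat \<Rightarrow> 'a set \<Rightarrow> ('a \<Rightarrow> 'a \<Rightarrow> bool) \<Rightarrow> nat" where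
  "hom_cycle t V E = card (cycle_homs t V E)"

definition mon_cycle :: "nat \<Rightarrow> 'a set \<Rightarrow> ('a \<Rightarrow> 'a \<Rightarrow> bool) \<Rightarrow> nat" where
  "mon_cycle t V E = card {f \<in> cycle_homs t V E. inj_on f {0..<t}}"

definition nbrs :: "'a set \<Rightarrow> ('a \<Rightarrow> 'a \<Rightarrow> bool) \<Rightarrow> 'a \<Rightarrow> 'a set" where
  "nbrs V E x = {y \<in> V. E x y}"

fun walk_prob :: "'a set \<Rightarrow> ('a \<Rightarrow> 'a \<Rightarrow> bool) \<Rightarrow> nat \<Rightarrow> 'a \<Rightarrow> 'a \<Rightarrow> real" where
  "walk_prob V E 0 x y = (if x = y then 1 else 0)"
| "walk_prob V E (Suc k) x y =
     (\<Sum>z\<in>nbrs V E x. walk_prob V E k z y) / real (card (nbrs V E x))"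

end

theory Submission
  imports Defs
begin

fun wc :: "'a set \<Rightarrow> ('a \<Rightarrow> 'a \<Rightarrow> bool) \<Rightarrow> nat \<Rightarrow> 'a \<Rightarrow> 'a \<Rightarrow> nat" where
  "wc V E 0 x y = (if x = y then 1 else 0)"
| "wc V E (Suc k) x y = (\<Sum>z\<in>nbrs V E x. wc V E k z y)"

definition paths :: "'a set \<Rightarrow> ('a \<Rightarrow> 'a \<Rightarrow> bool) \<Rightarrow> nat \<Rightarrow> 'a \<Rightarrow> 'a \<Rightarrow> (nat \<Rightarrow> 'a) set" where
  "paths V E k v w = {f \<in> {0..k} \<rightarrow>\<^sub>E V. f 0 = v \<and> f k = w \<and> (\<forall>i<k. E (f i) (f (Suc i)))}"

lemma finite_paths: "finite V \<Longrightarrow> finite (paths V E k v w)"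
  unfolding paths_def by (rule finite_subset[OF _ finite_PiE[of "{0..k}" "\<lambda>_. V"]]) auto

lemma finite_nbrs: "finite V \<Longrightarrow> finite (nbrs V E x)"
  unfolding nbrs_def by auto

lemma card_paths:
  assumes fin: "finite V"
  shows "v \<in> V \<Longrightarrow> card (paths V E k v w) = wc V E k v w"
proof (induction k arbitrary: v)
  case 0
  show ?case
  proof (cases "v = w")
    case True
    have "paths V E 0 v w = {\<lambda>i. if i = 0 then v else undefined}"
      using 0 True unfolding paths_def by (auto simp: PiE_def extensional_def)
    then show ?thesis using True by simp
  next
    case False
    have "paths V E 0 v w = {}" using False unfolding paths_def by auto
    then show ?thesis using False by simp
  qed
next
  case (Suc k)
  define \<psi> where "\<psi> = (\<lambda>(z::'a, g::nat \<Rightarrow> 'a). (\<lambda>i. if i = 0 then v else if i \<le> Suc k then g (i - 1) else undefined))"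
  let ?S = "Sigma (nbrs V E v) (\<lambda>z. paths V E k z w)"
  have inj: "inj_on \<psi> ?S"
  proof (rule inj_onI)
    fix a b assume a: "a \<in> ?S" and b: "b \<in> ?S" and eq: "\<psi> a = \<psi> b"
    obtain z g where az: "a = (z, g)" by (cases a)
    obtain z' g' where bz: "b = (z', g')" by (cases b)
    have g: "g \<in> paths V E k z w" "g' \<in> paths V E k z' w" using a b az bz by auto
    have "\<And>i. g i = g' i"
    proof -
      fix i
      show "g i = g' i"
      proof (cases "i \<le> k")
        case True
        have "\<psi> a (Suc i) = \<psi> b (Suc i)" using eq by simp
        then show ?thesis using True az bz unfolding \<psi>_def by simp
      next
        case False
        then show ?thesis using g unfolding paths_def by (auto simp: PiE_def extensional_def)
      qed
    qed
    then have "g = g'" by auto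
    moreover have "z = z'" using g \<open>g = g'\<close> unfolding paths_def by auto
    ultimately show "a = b" using az bz by simp
  qed
  have img: "paths V E (Suc k) v w = \<psi> ` ?S"
  proof
    show "paths V E (Suc k) v w \<subseteq> \<psi> ` ?S"
    proof
      fix f assume f: "f \<in> paths V E (Suc k) v w"
      define g where "g = (\<lambda>i. if i \<le> k then f (Suc i) else undefined)"
      have "f = \<psi> (f 1, g)"
      proof
        fix i show "f i = \<psi> (f 1, g) i"
          using f unfolding \<psi>_def g_def paths_def
          by (cases i) (auto simp: PiE_def extensional_def)
      qed
      moreover have "(f 1, g) \<in> ?S"
        using f unfolding g_def paths_def nbrs_def by (auto simp: PiE_def extensional_def)
      ultimately show "f \<in> \<psi> ` ?S" by blast
    qed
  next
    show "\<psi> ` ?S \<subseteq> paths V E (Suc k) v w"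
    proof
      fix f assume "f \<in> \<psi> ` ?S"
      then obtain z g where zg: "z \<in> nbrs V E v" "g \<in> paths V E k z w" and f: "f = \<psi> (z, g)" by auto
      have "f \<in> {0..Suc k} \<rightarrow>\<^sub>E V"
        using zg Suc.prems unfolding f \<psi>_def paths_def by (auto simp: PiE_def extensional_def)
      moreover have "f 0 = v" "f (Suc k) = w" using zg unfolding f \<psi>_def paths_def by auto
      moreover have "\<forall>i<Suc k. E (f i) (f (Suc i))"
      proof (intro allI impI)
        fix i assume i: "i < Suc k"
        show "E (f i) (f (Suc i))"
        proof (cases i)
          case 0 then show ?thesis using zg unfolding f \<psi>_def paths_def nbrs_def by auto
        next
          case (Suc j) then show ?thesis using zg i unfolding f \<psi>_def paths_def by auto
        qed
      qed
      ultimately show "f \<in> paths V E (Suc k) v w" unfolding paths_def by blast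
    qed
  qed
  have "card (paths V E (Suc k) v w) = card ?S" using img inj card_image by metis
  also have "\<dots> = (\<Sum>z\<in>nbrs V E v. card (paths V E k z w))"
    using fin by (simp add: finite_nbrs finite_paths)
  also have "\<dots> = (\<Sum>z\<in>nbrs V E v. wc V E k z w)"
    by (rule sum.cong) (auto simp: nbrs_def Suc.IH)
  finally show ?case by simp
qed

lemma card_cycle_homs:
  assumes fin: "finite V" and t: "0 < t"
  shows "card (cycle_homs t V E) = (\<Sum>v\<in>V. wc V E t v v)"
proof -
  define U where "U = (\<Union>v\<in>V. paths V E t v v)"
  define \<rho> where "\<rho> = (\<lambda>g::nat \<Rightarrow> 'a. restrict g {0..<t})"
  have inj: "inj_on \<rho> U"
  proof (rule inj_onI)
    fix g g' assume g: "g \<in> U" and g': "g' \<in> U" and eq: "\<rho> g = \<rho> g'"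
    show "g = g'"
    proof
      fix i
      show "g i = g' i"
      proof (cases "i < t")
        case True then show ?thesis using fun_cong[OF eq, of i] unfolding \<rho>_def by simp
      next
        case False
        show ?thesis
        proof (cases "i = t")
          case True
          have "g 0 = g' 0" using fun_cong[OF eq, of 0] t unfolding \<rho>_def by simp
          then show ?thesis using True g g' unfolding U_def paths_def by auto
        next
          case False
          then show ?thesis using \<open>\<not> i < t\<close> g g' unfolding U_def paths_def
            by (auto simp: PiE_def extensional_def)
        qed
      qed
    qed
  qed
  have img: "cycle_homs t V E = \<rho> ` U"
  proof
    show "cycle_homs t V E \<subseteq> \<rho> ` U"
    proof
      fix f assume f: "f \<in> cycle_homs t V E"
      define g where "g = (\<lambda>i. if i < t then f i else if i = t then f 0 else undefined)"
      have "\<rho> g = f"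
        using f unfolding \<rho>_def g_def cycle_homs_def by (auto simp: PiE_def extensional_def)
      moreover have "g \<in> paths V E t (f 0) (f 0)"
        unfolding paths_def
      proof (intro CollectI conjI allI impI)
        show "g \<in> {0..t} \<rightarrow>\<^sub>E V" using f t unfolding g_def cycle_homs_def by (auto simp: PiE_def extensional_def Pi_def)
        show "g 0 = f 0" using t unfolding g_def by simp
        show "g t = f 0" unfolding g_def by simp
        fix i assume i: "i < t"
        have "E (f i) (f (Suc i mod t))" using f i unfolding cycle_homs_def by auto
        then show "E (g i) (g (Suc i))" using i unfolding g_def
          by (cases "Suc i = t") auto
      qed
      moreover have "f 0 \<in> V" using f t unfolding cycle_homs_def by auto
      ultimately show "f \<in> \<rho> ` U" unfolding U_def by blast
    qed
  next
    show "\<rho> ` U \<subseteq> cycle_homs t V E"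
    proof
      fix f assume "f \<in> \<rho> ` U"
      then obtain g v where v: "v \<in> V" and g: "g \<in> paths V E t v v" and f: "f = \<rho> g"
        unfolding U_def by auto
      have "f \<in> {0..<t} \<rightarrow>\<^sub>E V" using g unfolding f \<rho>_def paths_def by auto
      moreover have "\<forall>i<t. E (f i) (f (Suc i mod t))"
      proof (intro allI impI)
        fix i assume i: "i < t"
        have e: "E (g i) (g (Suc i))" using g i unfolding paths_def by auto
        show "E (f i) (f (Suc i mod t))"
        proof (cases "Suc i = t")
          case True
          then show ?thesis using e g i t unfolding f \<rho>_def paths_def by auto
        next
          case False
          then have "Suc i < t" using i by simp
          then show ?thesis using e i unfolding f \<rho>_def by simp
        qed
      qed
      ultimately show "f \<in> cycle_homs t V E" unfolding cycle_homs_def by blast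
    qed
  qed
  have "card (cycle_homs t V E) = card U" using img inj card_image by metis
  also have "\<dots> = (\<Sum>v\<in>V. card (paths V E t v v))"
    unfolding U_def
    by (rule card_UN_disjoint) (simp_all add: fin finite_paths, auto simp: paths_def)
  also have "\<dots> = (\<Sum>v\<in>V. wc V E t v v)"
    by (rule sum.cong) (auto simp: card_paths fin)
  finally show ?thesis .
qed

lemma finite_cycle_homs: "finite V \<Longrightarrow> finite (cycle_homs t V E)"
  unfolding cycle_homs_def by (rule finite_subset[OF _ finite_PiE[of "{0..<t}" "\<lambda>_. V"]]) auto

lemma card_B_le:
  assumes fin: "finite V" and ik: "i + k < t"
  shows "card {f \<in> cycle_homs t V E. f i = f (i + k)}
         \<le> (\<Sum>v\<in>V. wc V E k v v * wc V E (t - k) v v)"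
proof -
  let ?B = "{f \<in> cycle_homs t V E. f i = f (i + k)}"
  let ?S = "Sigma V (\<lambda>v. paths V E k v v \<times> paths V E (t - k) v v)"
  define \<mu> where "\<mu> = (\<lambda>f::nat\<Rightarrow>'a. (f i, (\<lambda>m. if m \<le> k then f (i + m) else undefined,
                 \<lambda>m. if m \<le> t - k then f ((i + k + m) mod t) else undefined)))"
  have t: "0 < t" using ik by simp
  have sub: "\<mu> ` ?B \<subseteq> ?S"
  proof
    fix p assume "p \<in> \<mu> ` ?B"
    then obtain f where fB: "f \<in> ?B" and p: "p = \<mu> f" by auto
    have fP: "f \<in> {0..<t} \<rightarrow>\<^sub>E V" and fE: "\<And>j. j < t \<Longrightarrow> E (f j) (f (Suc j mod t))"
      and fik: "f i = f (i + k)"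
      using fB unfolding cycle_homs_def by auto
    have fV: "\<And>j. j < t \<Longrightarrow> f j \<in> V" using fP by auto
    have p1: "(\<lambda>m. if m \<le> k then f (i + m) else undefined) \<in> paths V E k (f i) (f i)"
      unfolding paths_def
    proof (intro CollectI conjI allI impI)
      show "(\<lambda>m. if m \<le> k then f (i + m) else undefined) \<in> {0..k} \<rightarrow>\<^sub>E V"
        using fV ik by (auto simp: PiE_def extensional_def)
      fix m assume m: "m < k"
      have "E (f (i + m)) (f (Suc (i + m) mod t))" by (rule fE) (use m ik in simp)
      moreover have "Suc (i + m) mod t = Suc (i + m)" using m ik by simp
      ultimately have "E (f (i + m)) (f (Suc (i + m)))" by simp
      then show "E ((\<lambda>m. if m \<le> k then f (i + m) else undefined) m)
                   ((\<lambda>m. if m \<le> k then f (i + m) else undefined) (Suc m))"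
        using m by simp
    qed (use fik in auto)
    have p2: "(\<lambda>m. if m \<le> t - k then f ((i + k + m) mod t) else undefined) \<in> paths V E (t - k) (f i) (f i)"
      unfolding paths_def
    proof (intro CollectI conjI allI impI)
      show "(\<lambda>m. if m \<le> t - k then f ((i + k + m) mod t) else undefined) \<in> {0..t - k} \<rightarrow>\<^sub>E V"
        using fV t by (auto simp: PiE_def extensional_def)
      show "(if 0 \<le> t - k then f ((i + k + 0) mod t) else undefined) = f i" using fik ik by simp
      have "(i + k + (t - k)) mod t = i" using ik by (simp add: add.commute)
      then show "(if t - k \<le> t - k then f ((i + k + (t - k)) mod t) else undefined) = f i" by simp
      fix m assume m: "m < t - k"
      have "E (f ((i + k + m) mod t)) (f (Suc ((i + k + m) mod t) mod t))" using fE t by simp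
      then show "E ((\<lambda>m. if m \<le> t - k then f ((i + k + m) mod t) else undefined) m)
                   ((\<lambda>m. if m \<le> t - k then f ((i + k + m) mod t) else undefined) (Suc m))"
        using m by (simp add: mod_Suc_eq)
    qed
    show "p \<in> ?S" using p1 p2 fV ik unfolding p \<mu>_def by auto
  qed
  have inj: "inj_on \<mu> ?B"
  proof (rule inj_onI)
    fix f f' assume fB: "f \<in> ?B" and fB': "f' \<in> ?B" and eq: "\<mu> f = \<mu> f'"
    have e1: "\<And>m. m \<le> k \<Longrightarrow> f (i + m) = f' (i + m)"
    proof -
      fix m assume "m \<le> k"
      then show "f (i + m) = f' (i + m)"
        using fun_cong[OF arg_cong[OF eq, of "\<lambda>p. fst (snd p)"], of m] unfolding \<mu>_def by simp
    qed
    have e2: "\<And>m. m \<le> t - k \<Longrightarrow> f ((i + k + m) mod t) = f' ((i + k + m) mod t)"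
    proof -
      fix m assume "m \<le> t - k"
      then show "f ((i + k + m) mod t) = f' ((i + k + m) mod t)"
        using fun_cong[OF arg_cong[OF eq, of "\<lambda>p. snd (snd p)"], of m] unfolding \<mu>_def by simp
    qed
    show "f = f'"
    proof
      fix j
      show "f j = f' j"
      proof (cases "j < t")
        case False
        then show ?thesis using fB fB' unfolding cycle_homs_def by (auto simp: PiE_def extensional_def)
      next
        case jt: True
        show ?thesis
        proof (cases "i \<le> j \<and> j \<le> i + k")
          case True
          then have "j - i \<le> k" "i + (j - i) = j" by arith+
          then show ?thesis using e1[of "j - i"] by simp
        next
          case False
          show ?thesis
          proof (cases "j < i")
            case True
            have "(i + k + (j + t - i - k)) mod t = j" using True jt ik by simp
            moreover have "j + t - i - k \<le> t - k" using True ik by simp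
            ultimately show ?thesis using e2[of "j + t - i - k"] by simp
          next
            case False
            with \<open>\<not> (i \<le> j \<and> j \<le> i + k)\<close> have "i + k < j" by simp
            have "(i + k + (j - i - k)) mod t = j" using \<open>i + k < j\<close> jt by simp
            moreover have "j - i - k \<le> t - k" using jt by simp
            ultimately show ?thesis using e2[of "j - i - k"] by simp
          qed
        qed
      qed
    qed
  qed
  have "card ?B \<le> card ?S"
    by (rule card_inj_on_le[OF inj sub]) (simp add: fin finite_paths)
  also have "card ?S = (\<Sum>v\<in>V. card (paths V E k v v) * card (paths V E (t - k) v v))"
    using fin by (simp add: finite_paths card_cartesian_product)
  also have "\<dots> = (\<Sum>v\<in>V. wc V E k v v * wc V E (t - k) v v)"
    by (rule sum.cong) (auto simp: card_paths fin)
  finally show ?thesis .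
qed

lemma card_bad_le:
  assumes fin: "finite V" and irr: "\<forall>y\<in>V. \<not> E y y"
  shows "card {f \<in> cycle_homs t V E. \<not> inj_on f {0..<t}}
     \<le> (\<Sum>i\<in>{0..<t}. \<Sum>k\<in>{2..t-2}. \<Sum>v\<in>V. wc V E k v v * wc V E (t - k) v v)"
proof -
  define B where "B = (\<lambda>i k. {f \<in> cycle_homs t V E. i + k < t \<and> f i = f (i + k)})"
  have sub: "{f \<in> cycle_homs t V E. \<not> inj_on f {0..<t}} \<subseteq> (\<Union>i\<in>{0..<t}. \<Union>k\<in>{2..t-2}. B i k)"
  proof
    fix f assume f: "f \<in> {f \<in> cycle_homs t V E. \<not> inj_on f {0..<t}}"
    then have fc: "f \<in> cycle_homs t V E" and ni: "\<not> inj_on f {0..<t}" by auto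
    have fE: "\<And>j. j < t \<Longrightarrow> E (f j) (f (Suc j mod t))" and fV: "\<And>j. j < t \<Longrightarrow> f j \<in> V"
      using fc unfolding cycle_homs_def by auto
    obtain a b where ab: "a < t" "b < t" "a \<noteq> b" "f a = f b" using ni unfolding inj_on_def by auto
    obtain a' b' where ab': "a' < b'" "b' < t" "f a' = f b'"
    proof (cases "a < b")
      case True then show ?thesis using that ab by auto
    next
      case False then show ?thesis using that[of b a] ab by auto
    qed
    have n1: "b' \<noteq> Suc a'"
    proof
      assume h: "b' = Suc a'"
      have "E (f a') (f (Suc a' mod t))" by (rule fE) (use ab' in simp)
      then have "E (f a') (f a')" using h ab' by simp
      then show False using irr fV ab' by auto
    qed
    have n2: "\<not> (a' = 0 \<and> b' = t - 1)"
    proof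
      assume h: "a' = 0 \<and> b' = t - 1"
      have "E (f b') (f (Suc b' mod t))" by (rule fE) (use ab' in simp)
      moreover have "Suc b' mod t = 0" using h ab' by simp
      ultimately have "E (f b') (f b')" using h ab' by simp
      then show False using irr fV ab' by auto
    qed
    have "b' - a' \<in> {2..t-2}" using n1 n2 ab' by auto
    moreover have "f \<in> B a' (b' - a')" unfolding B_def using fc ab' by auto
    ultimately show "f \<in> (\<Union>i\<in>{0..<t}. \<Union>k\<in>{2..t-2}. B i k)" using ab' by (intro UN_I[of a'] UN_I[of "b' - a'"]) auto
  qed
  have "card {f \<in> cycle_homs t V E. \<not> inj_on f {0..<t}} \<le> card (\<Union>i\<in>{0..<t}. \<Union>k\<in>{2..t-2}. B i k)"
  proof (rule card_mono[OF _ sub])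
    show "finite (\<Union>i\<in>{0..<t}. \<Union>k\<in>{2..t-2}. B i k)"
      by (rule finite_subset[OF _ finite_cycle_homs[OF fin]]) (auto simp: B_def)
  qed
  also have "\<dots> \<le> (\<Sum>i\<in>{0..<t}. card (\<Union>k\<in>{2..t-2}. B i k))" by (rule card_UN_le) simp
  also have "\<dots> \<le> (\<Sum>i\<in>{0..<t}. \<Sum>k\<in>{2..t-2}. card (B i k))"
    by (rule sum_mono) (rule card_UN_le, simp)
  also have "\<dots> \<le> (\<Sum>i\<in>{0..<t}. \<Sum>k\<in>{2..t-2}. \<Sum>v\<in>V. wc V E k v v * wc V E (t - k) v v)"
  proof (rule sum_mono, rule sum_mono)
    fix i k
    show "card (B i k) \<le> (\<Sum>v\<in>V. wc V E k v v * wc V E (t - k) v v)"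
    proof (cases "i + k < t")
      case True
      then have "B i k = {f \<in> cycle_homs t V E. f i = f (i + k)}" unfolding B_def by auto
      then show ?thesis using card_B_le[OF fin True] by simp
    next
      case False
      then have "B i k = {}" unfolding B_def by auto
      then show ?thesis by simp
    qed
  qed
  finally show ?thesis .
qed

lemma nbrs_aut:
  assumes inj: "inj_on \<sigma> V" and surj: "\<sigma> ` V = V"
    and pres: "\<forall>a\<in>V. \<forall>b\<in>V. E (\<sigma> a) (\<sigma> b) = E a b" and v: "v \<in> V"
  shows "nbrs V E (\<sigma> v) = \<sigma> ` nbrs V E v"
proof
  show "nbrs V E (\<sigma> v) \<subseteq> \<sigma> ` nbrs V E v"
  proof
    fix z assume "z \<in> nbrs V E (\<sigma> v)"
    then have z: "z \<in> V" "E (\<sigma> v) z" unfolding nbrs_def by auto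
    then obtain z' where z': "z' \<in> V" "z = \<sigma> z'" using surj by blast
    then have "E v z'" using z pres v by auto
    then show "z \<in> \<sigma> ` nbrs V E v" using z' unfolding nbrs_def by auto
  qed
next
  show "\<sigma> ` nbrs V E v \<subseteq> nbrs V E (\<sigma> v)"
    using pres v surj unfolding nbrs_def by auto
qed

lemma wc_aut:
  assumes inj: "inj_on \<sigma> V" and surj: "\<sigma> ` V = V"
    and pres: "\<forall>a\<in>V. \<forall>b\<in>V. E (\<sigma> a) (\<sigma> b) = E a b" and w: "w \<in> V"
  shows "v \<in> V \<Longrightarrow> wc V E k (\<sigma> v) (\<sigma> w) = wc V E k v w"
proof (induction k arbitrary: v)
  case 0
  then show ?case using inj w by (auto simp: inj_on_def)
next
  case (Suc k)
  have "wc V E (Suc k) (\<sigma> v) (\<sigma> w) = (\<Sum>z\<in>\<sigma> ` nbrs V E v. wc V E k z (\<sigma> w))"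
    using nbrs_aut[OF inj surj pres Suc.prems] by simp
  also have "\<dots> = (\<Sum>z\<in>nbrs V E v. wc V E k (\<sigma> z) (\<sigma> w))"
    by (rule sum.reindex_cong[where l = \<sigma>]) (auto intro: inj_on_subset[OF inj] simp: nbrs_def)
  also have "\<dots> = (\<Sum>z\<in>nbrs V E v. wc V E k z w)"
    by (rule sum.cong) (auto simp: nbrs_def Suc.IH)
  finally show ?case by simp
qed

lemma card_nbrs_aut:
  assumes inj: "inj_on \<sigma> V" and surj: "\<sigma> ` V = V"
    and pres: "\<forall>a\<in>V. \<forall>b\<in>V. E (\<sigma> a) (\<sigma> b) = E a b" and v: "v \<in> V"
  shows "card (nbrs V E (\<sigma> v)) = card (nbrs V E v)"
  using nbrs_aut[OF assms] card_image[OF inj_on_subset[OF inj]] by (simp add: nbrs_def)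

lemma walk_prob_wc:
  assumes deg: "\<forall>v\<in>V. card (nbrs V E v) = d"
  shows "v \<in> V \<Longrightarrow> walk_prob V E k v w = real (wc V E k v w) / real d ^ k"
proof (induction k arbitrary: v)
  case 0 then show ?case by simp
next
  case (Suc k)
  have "walk_prob V E (Suc k) v w = (\<Sum>z\<in>nbrs V E v. real (wc V E k z w) / real d ^ k) / real d"
    using deg Suc.prems by (simp add: Suc.IH nbrs_def)
  also have "\<dots> = real (wc V E (Suc k) v w) / real d ^ Suc k"
    by (simp add: sum_divide_distrib[symmetric] of_nat_sum)
  finally show ?case .
qed

lemma gj_aut:
  assumes x: "x \<in> gj_vertices n r" and y: "y \<in> gj_vertices n r"
  shows "\<exists>\<sigma>. inj_on \<sigma> (gj_vertices n r) \<and> \<sigma> ` gj_vertices n r = gj_vertices n r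
     \<and> (\<forall>a\<in>gj_vertices n r. \<forall>b\<in>gj_vertices n r. gj_adj s (\<sigma> a) (\<sigma> b) = gj_adj s a b) \<and> \<sigma> x = y"
proof -
  have xs: "x \<subseteq> {1..n}" "card x = r" and ys: "y \<subseteq> {1..n}" "card y = r"
    using x y unfolding gj_vertices_def by auto
  have fx: "finite x" "finite y" using xs ys finite_subset by auto
  obtain h1 where h1: "bij_betw h1 x y" using finite_same_card_bij[OF fx] xs ys by auto
  have "card ({1..n} - x) = card ({1..n} - y)"
    using xs ys by (simp add: card_Diff_subset fx)
  then obtain h2 where h2: "bij_betw h2 ({1..n} - x) ({1..n} - y)"
    using finite_same_card_bij by blast
  define \<pi> where "\<pi> = (\<lambda>j. if j \<in> x then h1 j else h2 j)"
  have b1: "bij_betw \<pi> x y" using h1 by (rule bij_betw_cong[THEN iffD1, rotated]) (simp add: \<pi>_def)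
  have b2: "bij_betw \<pi> ({1..n} - x) ({1..n} - y)"
    using h2 by (rule bij_betw_cong[THEN iffD1, rotated]) (simp add: \<pi>_def)
  have "bij_betw \<pi> (x \<union> ({1..n} - x)) (y \<union> ({1..n} - y))"
    by (rule bij_betw_combine[OF b1 b2]) auto
  moreover have "x \<union> ({1..n} - x) = {1..n}" "y \<union> ({1..n} - y) = {1..n}" using xs ys by auto
  ultimately have b: "bij_betw \<pi> {1..n} {1..n}" by simp
  then have injp: "inj_on \<pi> {1..n}" and imp: "\<pi> ` {1..n} = {1..n}" by (auto simp: bij_betw_def)
  let ?V = "gj_vertices n r"
  define \<sigma> where "\<sigma> = (\<lambda>A. \<pi> ` A)"
  have inj: "inj_on \<sigma> ?V"
  proof (rule inj_onI)
    fix A B assume "A \<in> ?V" "B \<in> ?V" "\<sigma> A = \<sigma> B"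
    then show "A = B" unfolding \<sigma>_def gj_vertices_def
      using inj_on_image_eq_iff[OF injp, of A B] by auto
  qed
  have into: "\<sigma> ` ?V \<subseteq> ?V"
  proof
    fix B assume "B \<in> \<sigma> ` ?V"
    then obtain A where A: "A \<subseteq> {1..n}" "card A = r" "B = \<pi> ` A" unfolding \<sigma>_def gj_vertices_def by auto
    have "card B = r" using A card_image[OF inj_on_subset[OF injp A(1)]] by simp
    moreover have "B \<subseteq> {1..n}" using A imp by auto
    ultimately show "B \<in> ?V" unfolding gj_vertices_def by auto
  qed
  have finV: "finite ?V" unfolding gj_vertices_def by (rule finite_subset[of _ "Pow {1..n}"]) auto
  have surj: "\<sigma> ` ?V = ?V" by (rule endo_inj_surj[OF finV into inj])
  have pres: "\<forall>a\<in>?V. \<forall>b\<in>?V. gj_adj s (\<sigma> a) (\<sigma> b) = gj_adj s a b"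
  proof (intro ballI)
    fix a b assume a: "a \<in> ?V" and b: "b \<in> ?V"
    then have ab: "a \<subseteq> {1..n}" "b \<subseteq> {1..n}" unfolding gj_vertices_def by auto
    have "\<pi> ` a \<inter> \<pi> ` b = \<pi> ` (a \<inter> b)" using inj_on_image_Int[OF injp ab] by simp
    moreover have "card (\<pi> ` (a \<inter> b)) = card (a \<inter> b)"
      by (rule card_image[OF inj_on_subset[OF injp]]) (use ab in auto)
    ultimately show "gj_adj s (\<sigma> a) (\<sigma> b) = gj_adj s a b" unfolding gj_adj_def \<sigma>_def by simp
  qed
  have "\<sigma> x = y" unfolding \<sigma>_def using b1 by (simp add: bij_betw_def)
  then show ?thesis using inj surj pres by blast
qed

theorem mainTheorem4:
  fixes n r s t :: nat and x :: "nat set"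
  assumes "s < r" and "r < n" and "4 \<le> t"
    and "x \<in> gj_vertices n r"
  shows "0 \<le> (real (hom_cycle t (gj_vertices n r) (gj_adj s))
                 - real (mon_cycle t (gj_vertices n r) (gj_adj s)))
              / real (hom_cycle t (gj_vertices n r) (gj_adj s))
    \<and> (real (hom_cycle t (gj_vertices n r) (gj_adj s))
                 - real (mon_cycle t (gj_vertices n r) (gj_adj s)))
              / real (hom_cycle t (gj_vertices n r) (gj_adj s))
       \<le> real t * (\<Sum>k=2..t-2.
            walk_prob (gj_vertices n r) (gj_adj s) k x x
            * walk_prob (gj_vertices n r) (gj_adj s) (t - k) x x
            / walk_prob (gj_vertices n r) (gj_adj s) t x x)"
proof -
  define V where "V = gj_vertices n r"
  define E where "E = gj_adj s"
  define W where "W = (\<lambda>k. wc V E k x x)"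
  define d where "d = card (nbrs V E x)"
  have xV: "x \<in> V" using assms(4) V_def by simp
  have fin: "finite V" unfolding V_def gj_vertices_def by (rule finite_subset[of _ "Pow {1..n}"]) auto
  have irr: "\<forall>y\<in>V. \<not> E y y" using assms(1) unfolding V_def E_def gj_vertices_def gj_adj_def by auto
  have aut: "\<And>v. v \<in> V \<Longrightarrow> \<exists>\<sigma>. inj_on \<sigma> V \<and> \<sigma> ` V = V \<and> (\<forall>a\<in>V. \<forall>b\<in>V. E (\<sigma> a) (\<sigma> b) = E a b) \<and> \<sigma> x = v"
  proof -
    fix v assume v: "v \<in> V"
    then have v': "v \<in> gj_vertices n r" by (simp add: V_def)
    from gj_aut[OF assms(4) v', of s]
    show "\<exists>\<sigma>. inj_on \<sigma> V \<and> \<sigma> ` V = V \<and> (\<forall>a\<in>V. \<forall>b\<in>V. E (\<sigma> a) (\<sigma> b) = E a b) \<and> \<sigma> x = v"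
      unfolding V_def E_def .
  qed
  have trans: "\<And>v k. v \<in> V \<Longrightarrow> wc V E k v v = W k"
  proof -
    fix v k assume v: "v \<in> V"
    obtain \<sigma> where \<sigma>: "inj_on \<sigma> V" "\<sigma> ` V = V" "\<forall>a\<in>V. \<forall>b\<in>V. E (\<sigma> a) (\<sigma> b) = E a b" "\<sigma> x = v"
      using aut[OF v] by blast
    show "wc V E k v v = W k" using wc_aut[OF \<sigma>(1-3) xV xV, of k] \<sigma>(4) W_def by simp
  qed
  have deg: "\<forall>v\<in>V. card (nbrs V E v) = d"
  proof
    fix v assume v: "v \<in> V"
    obtain \<sigma> where \<sigma>: "inj_on \<sigma> V" "\<sigma> ` V = V" "\<forall>a\<in>V. \<forall>b\<in>V. E (\<sigma> a) (\<sigma> b) = E a b" "\<sigma> x = v"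
      using aut[OF v] by blast
    show "card (nbrs V E v) = d" using card_nbrs_aut[OF \<sigma>(1-3) xV] \<sigma>(4) d_def by simp
  qed
  have wp: "\<And>k. walk_prob V E k x x = real (W k) / real d ^ k"
    using walk_prob_wc[OF deg xV] W_def by simp
  have t0: "0 < t" using assms(3) by simp
  define hom where "hom = hom_cycle t V E"
  define mon where "mon = mon_cycle t V E"
  define bad where "bad = {f \<in> cycle_homs t V E. \<not> inj_on f {0..<t}}"
  have homeq: "hom = card V * W t"
    unfolding hom_def hom_cycle_def using card_cycle_homs[OF fin t0] trans by simp
  have monle: "mon \<le> hom" unfolding mon_def hom_def mon_cycle_def hom_cycle_def
    by (rule card_mono[OF finite_cycle_homs[OF fin]]) auto
  have "bad = cycle_homs t V E - {f \<in> cycle_homs t V E. inj_on f {0..<t}}" unfolding bad_def by auto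
  then have badeq: "card bad = hom - mon" unfolding hom_def mon_def hom_cycle_def mon_cycle_def
    by (simp only:) (rule card_Diff_subset, rule finite_subset[OF _ finite_cycle_homs[OF fin]], auto)
  have "card bad \<le> (\<Sum>i\<in>{0..<t}. \<Sum>k\<in>{2..t-2}. \<Sum>v\<in>V. wc V E k v v * wc V E (t - k) v v)"
    unfolding bad_def by (rule card_bad_le[of V E, OF fin irr])
  also have "\<dots> = (\<Sum>i\<in>{0..<t}. \<Sum>k\<in>{2..t-2}. card V * (W k * W (t - k)))"
    by (intro sum.cong refl) (simp add: trans)
  also have "\<dots> = t * (\<Sum>k\<in>{2..t-2}. card V * (W k * W (t - k)))"
    by simp
  finally have badle: "card bad \<le> t * (\<Sum>k\<in>{2..t-2}. card V * (W k * W (t - k)))" .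
  have rnn: "0 \<le> real t * (\<Sum>k=2..t-2. walk_prob V E k x x * walk_prob V E (t - k) x x / walk_prob V E t x x)"
    by (intro mult_nonneg_nonneg sum_nonneg divide_nonneg_nonneg) (auto simp: wp)
  have lhs0: "0 \<le> (real hom - real mon) / real hom" using monle by simp
  have main: "(real hom - real mon) / real hom
     \<le> real t * (\<Sum>k=2..t-2. walk_prob V E k x x * walk_prob V E (t - k) x x / walk_prob V E t x x)"
  proof (cases "hom = 0")
    case True then show ?thesis using rnn by simp
  next
    case False
    then have Wt: "0 < W t" and NV: "0 < card V" using homeq by auto
    have dpos: "0 < d"
    proof (rule ccontr)
      assume "\<not> 0 < d"
      then have "nbrs V E x = {}" using d_def finite_nbrs[OF fin] by auto
      moreover obtain t' where "t = Suc t'" using t0 by (cases t) auto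
      ultimately have "W t = 0" unfolding W_def by simp
      then show False using Wt by simp
    qed
    have tm: "\<And>k. k \<in> {2..t-2} \<Longrightarrow> walk_prob V E k x x * walk_prob V E (t - k) x x / walk_prob V E t x x
        = real (W k) * real (W (t - k)) / real (W t)"
    proof -
      fix k assume k: "k \<in> {2..t-2}"
      then have "k + (t - k) = t" by auto
      then have dt: "real d ^ t = real d ^ k * real d ^ (t - k)"
        by (metis power_add)
      define a where "a = real d ^ k"
      define b where "b = real d ^ (t - k)"
      have ab: "a > 0" "b > 0" using dpos a_def b_def by auto
      have "walk_prob V E k x x * walk_prob V E (t - k) x x / walk_prob V E t x x
         = (real (W k) / a) * (real (W (t - k)) / b) / (real (W t) / (a * b))"
        unfolding wp a_def b_def dt ..
      also have "\<dots> = real (W k) * real (W (t - k)) / real (W t)"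
        using ab by (simp add: field_simps)
      finally show "walk_prob V E k x x * walk_prob V E (t - k) x x / walk_prob V E t x x
        = real (W k) * real (W (t - k)) / real (W t)" .
    qed
    have "real hom - real mon = real (card bad)" using badeq monle by simp
    also have "\<dots> \<le> real t * (\<Sum>k\<in>{2..t-2}. real (card V) * (real (W k) * real (W (t - k))))"
    proof -
      have "real (card bad) \<le> real (t * (\<Sum>k\<in>{2..t-2}. card V * (W k * W (t - k))))"
        using badle by (simp only: of_nat_le_iff)
      also have "\<dots> = real t * (\<Sum>k\<in>{2..t-2}. real (card V) * (real (W k) * real (W (t - k))))"
        by (simp only: of_nat_mult of_nat_sum)
      finally show ?thesis .
    qed
    finally have num: "real hom - real mon \<le> real (card V) * (real t * (\<Sum>k\<in>{2..t-2}. real (W k) * real (W (t - k))))"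
      by (simp add: sum_distrib_left mult_ac)
    have "(real hom - real mon) / real hom \<le> real (card V) * (real t * (\<Sum>k\<in>{2..t-2}. real (W k) * real (W (t - k)))) / real hom"
      using num False by (simp add: divide_right_mono)
    also have "\<dots> = real t * (\<Sum>k\<in>{2..t-2}. real (W k) * real (W (t - k))) / real (W t)"
      using NV Wt homeq by simp
    also have "\<dots> = real t * (\<Sum>k=2..t-2. real (W k) * real (W (t - k)) / real (W t))"
      by (simp only: sum_divide_distrib[symmetric] times_divide_eq_right)
    also have "\<dots> = real t * (\<Sum>k=2..t-2. walk_prob V E k x x * walk_prob V E (t - k) x x / walk_prob V E t x x)"
      using tm by simp
    finally show ?thesis .
  qed
  show ?thesis using lhs0 main unfolding hom_def mon_def V_def E_def by simp
qed

end
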